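(* Let $\{\alpha_n\}$ and $\{\beta_n\}$ be sequences in $[0,1]$, $\{\tau_n\}$ a nonnegative sequence, and $r\in\mathbb Z^+$ such that $\sum_{n=1}^\infty\tau_n|\alpha_n-\beta_n|^r<\infty$. If $\sum_{n=1}^\infty\tau_n\beta_n<\infty$, then $\sum_{n=1}^\infty\tau_n\alpha_n^r<\infty$. *)

theory Defs
  imports "HOL-Analysis.Analysis"
begin

end

theory Submission
  imports Defs
begin

lemma pw:
  fixes a b :: real and r :: nat
  assumes "0 \<le> a" "a \<le> 1" "0 \<le> b" "b \<le> 1" "r \<ge> 1"
  shows "a ^ r \<le> 2 ^ r * (\<bar>a - b\<bar> ^ r + b)"
proof -
  let ?d = "\<bar>a - b\<bar>" let ?m = "max ?d b"
  have "a ^ r \<le> (?d + b) ^ r" by (rule power_mono) (use assms in auto)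
  also have "\<dots> \<le> (2 * ?m) ^ r" by (rule power_mono) (use assms in \<open>auto simp: max_def\<close>)
  also have "\<dots> = 2 ^ r * ?m ^ r" by (simp add: power_mult_distrib)
  also have "?m ^ r \<le> ?d ^ r + b ^ r"
    by (cases "?d \<le> b") (auto simp: max_def assms)
  also have "b ^ r \<le> b" using assms by (simp add: power_le_one_iff power_decreasing[of 1 r b, simplified])
  finally show ?thesis by (simp add: mult_left_mono)
qed

theorem lemma4:
  fixes \<alpha> \<beta> \<tau> :: "nat \<Rightarrow> real" and r :: nat
  assumes "\<And>n. n \<ge> 1 \<Longrightarrow> \<alpha> n \<in> {0..1}"
    and "\<And>n. n \<ge> 1 \<Longrightarrow> \<beta> n \<in> {0..1}"
    and "\<And>n. n \<ge> 1 \<Longrightarrow> \<tau> n \<ge> 0"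
    and "r \<ge> 1"
    and "summable (\<lambda>n. \<tau> (Suc n) * \<bar>\<alpha> (Suc n) - \<beta> (Suc n)\<bar> ^ r)"
    and "summable (\<lambda>n. \<tau> (Suc n) * \<beta> (Suc n))"
  shows "summable (\<lambda>n. \<tau> (Suc n) * \<alpha> (Suc n) ^ r)"
proof (rule summable_comparison_test)
  show "summable (\<lambda>n. 2 ^ r * (\<tau> (Suc n) * \<bar>\<alpha> (Suc n) - \<beta> (Suc n)\<bar> ^ r + \<tau> (Suc n) * \<beta> (Suc n)))"
    using assms(5,6) by (intro summable_mult summable_add)
  show "\<exists>N. \<forall>n\<ge>N. norm (\<tau> (Suc n) * \<alpha> (Suc n) ^ r) \<le> 2 ^ r * (\<tau> (Suc n) * \<bar>\<alpha> (Suc n) - \<beta> (Suc n)\<bar> ^ r + \<tau> (Suc n) * \<beta> (Suc n))"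
  proof (intro exI allI impI)
    fix n :: nat
    have a: "0 \<le> \<alpha> (Suc n)" "\<alpha> (Suc n) \<le> 1" using assms(1)[of "Suc n"] by auto
    have b: "0 \<le> \<beta> (Suc n)" "\<beta> (Suc n) \<le> 1" using assms(2)[of "Suc n"] by auto
    have t: "0 \<le> \<tau> (Suc n)" using assms(3)[of "Suc n"] by auto
    have "\<tau> (Suc n) * \<alpha> (Suc n) ^ r \<le> \<tau> (Suc n) * (2 ^ r * (\<bar>\<alpha> (Suc n) - \<beta> (Suc n)\<bar> ^ r + \<beta> (Suc n)))"
      using pw[OF a b assms(4)] t by (rule mult_left_mono)
    then show "norm (\<tau> (Suc n) * \<alpha> (Suc n) ^ r) \<le> 2 ^ r * (\<tau> (Suc n) * \<bar>\<alpha> (Suc n) - \<beta> (Suc n)\<bar> ^ r + \<tau> (Suc n) * \<beta> (Suc n))"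
      using a t by (simp add: algebra_simps)
  qed
qed

end
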